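(* Let $\rho$ be an $n$-qubit state and $\mathcal S$ a collection of subsets of $[n]$ such that the hypergraph $([n],\mathcal S)$ is connected and $\rho_S$ is a symmetric state on $\mathcal H_S$ for every $S\in\mathcal S$. Then $\rho$ is a symmetric state.
   Context: Let $[n]=\{1,\dots,n\}$, $\mathcal H_{[n]}=(\mathbb C^2)^{\otimes n}$, $\mathcal H_S$ the tensor product of the qubits in $S$, and $\rho_S$ the partial trace of $\rho$ over qubits outside $S$. The symmetric subspace of $\mathcal H_S$ consists of vectors invariant under swapping any two qubits of $S$; a state on $\mathcal H_S$ is symmetric if its range is contained in the symmetric subspace (every single-qubit state is symmetric). The hypergraph $([n],\mathcal S)$ is connected if for every partition of $[n]$ into nonempty sets $X,Y$ some $S\in\mathcal S$ intersects both $X$ and $Y$. *)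

theory Defs
  imports Complex_Main
begin

text \<open>Computational basis of H_S: classical bit assignments to the qubits in S
  (extensionally False outside S). Operators on H_S are matrices indexed by such
  assignments; vectors are functions on assignments (only values on configs S matter).\<close>

type_synonym config = "nat \<Rightarrow> bool"
type_synonym qop = "config \<Rightarrow> config \<Rightarrow> complex"
type_synonym qvec = "config \<Rightarrow> complex"

definition configs :: "nat set \<Rightarrow> config set" where
  "configs S = {x. \<forall>i. i \<notin> S \<longrightarrow> \<not> x i}"

definition merge :: "nat set \<Rightarrow> config \<Rightarrow> config \<Rightarrow> config" where
  "merge S x z = (\<lambda>i. if i \<in> S then x i else z i)"

definition apply_op :: "nat set \<Rightarrow> qop \<Rightarrow> qvec \<Rightarrow> qvec" where
  "apply_op S A v = (\<lambda>x. \<Sum>y\<in>configs S. A x y * v y)"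

definition inner_S :: "nat set \<Rightarrow> qvec \<Rightarrow> qvec \<Rightarrow> complex" where
  "inner_S S u v = (\<Sum>x\<in>configs S. cnj (u x) * v x)"

definition is_state :: "nat set \<Rightarrow> qop \<Rightarrow> bool" where
  "is_state S \<rho> \<longleftrightarrow>
     (\<forall>v. Im (inner_S S v (apply_op S \<rho> v)) = 0 \<and> Re (inner_S S v (apply_op S \<rho> v)) \<ge> 0)
     \<and> (\<Sum>x\<in>configs S. \<rho> x x) = 1"

definition swapq :: "nat \<Rightarrow> nat \<Rightarrow> config \<Rightarrow> config" where
  "swapq i j x = (\<lambda>k. if k = i then x j else if k = j then x i else x k)"

definition sym_subspace :: "nat set \<Rightarrow> qvec set" where
  "sym_subspace S = {\<psi>. \<forall>i\<in>S. \<forall>j\<in>S. \<forall>x\<in>configs S. \<psi> (swapq i j x) = \<psi> x}"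

definition op_range :: "nat set \<Rightarrow> qop \<Rightarrow> qvec set" where
  "op_range S A = {apply_op S A v | v. True}"

definition symmetric_state :: "nat set \<Rightarrow> qop \<Rightarrow> bool" where
  "symmetric_state S \<rho> \<longleftrightarrow> is_state S \<rho> \<and> op_range S \<rho> \<subseteq> sym_subspace S"

definition partial_trace :: "nat \<Rightarrow> nat set \<Rightarrow> qop \<Rightarrow> qop" where
  "partial_trace n S \<rho> =
     (\<lambda>x y. \<Sum>z\<in>configs ({1..n} - S). \<rho> (merge S x z) (merge S y z))"

definition hypergraph_connected :: "nat set \<Rightarrow> nat set set \<Rightarrow> bool" where
  "hypergraph_connected V \<S> \<longleftrightarrow>
     (\<forall>X Y. X \<noteq> {} \<and> Y \<noteq> {} \<and> X \<union> Y = V \<and> X \<inter> Y = {} \<longrightarrow>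
        (\<exists>S\<in>\<S>. S \<inter> X \<noteq> {} \<and> S \<inter> Y \<noteq> {}))"

end

theory Submission
  imports Defs
begin

lemma quad_zero:
  fixes c d :: real assumes "\<forall>r. r*c + r^2*d \<ge> 0" shows "c = 0"
proof (rule ccontr)
  assume c: "c \<noteq> 0"
  define r where "r = -c/(\<bar>d\<bar>+1)"
  have D: "\<bar>d\<bar>+1 > 0" by simp
  have rD: "r*(\<bar>d\<bar>+1) = -c" unfolding r_def using D by simp
  have "r*c + r^2*d = r^2 * (d - (\<bar>d\<bar>+1))"
  proof -
    have "r^2*(\<bar>d\<bar>+1) = r*(r*(\<bar>d\<bar>+1))" by (simp add: power2_eq_square)
    also have "\<dots> = -(r*c)" using rD by simp
    finally show ?thesis by (simp add: algebra_simps)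
  qed
  also have "\<dots> < 0"
    using c D rD by (intro mult_pos_neg) auto
  finally show False using assms by (metis not_less)
qed

lemma sesq_zero:
  fixes a b d :: complex
  assumes A: "\<And>t. Im (cnj t*a + t*b + cnj t*t*d) = 0 \<and> Re (cnj t*a + t*b + cnj t*t*d) \<ge> 0"
  shows "a = 0 \<and> b = 0"
proof -
  have h1: "\<forall>r::real. r*(Re a + Re b) + r^2*Re d \<ge> 0"
  proof
    fix r :: real show "r*(Re a + Re b) + r^2*Re d \<ge> 0"
      using A[of "complex_of_real r"] by (simp add: algebra_simps power2_eq_square)
  qed
  have h2: "\<forall>r::real. r*(Im a - Im b) + r^2*Re d \<ge> 0"
  proof
    fix r :: real show "r*(Im a - Im b) + r^2*Re d \<ge> 0"
      using A[of "\<i> * complex_of_real r"] by (simp add: algebra_simps power2_eq_square)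
  qed
  have i1: "Im a + Im b + Im d = 0" using A[of 1] by simp
  have i2: "- (Im a + Im b) + Im d = 0" using A[of "-1"] by simp
  have i3: "- Re a + Re b + Im d = 0" using A[of "\<i>"] by simp
  have i4: "Re a - Re b + Im d = 0" using A[of "-\<i>"] by simp
  have "Re a + Re b = 0" using quad_zero h1 by blast
  moreover have "Im a - Im b = 0" using quad_zero h2 by blast
  ultimately show ?thesis using i1 i2 i3 i4 by (simp add: complex_eq_iff)
qed

lemma finite_configs: "finite S \<Longrightarrow> finite (configs S)"
proof -
  assume f: "finite S"
  have "configs S \<subseteq> (\<lambda>A i. i \<in> A) ` Pow S"
  proof
    fix x assume x: "x \<in> configs S"
    have "x = (\<lambda>i. i \<in> {i. x i})" by auto
    moreover have "{i. x i} \<subseteq> S" using x by (auto simp: configs_def)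
    ultimately show "x \<in> (\<lambda>A i. i \<in> A) ` Pow S" by blast
  qed
  thus ?thesis using f by (meson finite_Pow_iff finite_imageI finite_subset)
qed

lemma swap_configs: "i \<in> S \<Longrightarrow> j \<in> S \<Longrightarrow> x \<in> configs S \<Longrightarrow> swapq i j x \<in> configs S"
  by (auto simp: configs_def swapq_def)

lemma swap_swap[simp]: "swapq i j (swapq i j x) = x"
  by (auto simp: swapq_def fun_eq_iff)

lemma swap_refl[simp]: "swapq i i x = x"
  by (auto simp: swapq_def fun_eq_iff)

lemma swap_comm: "swapq i j = swapq j i"
  by (auto simp: swapq_def fun_eq_iff)

lemma swap_trans: "j \<noteq> i \<Longrightarrow> j \<noteq> k \<Longrightarrow> i \<noteq> k \<Longrightarrow>
   swapq i k x = swapq i j (swapq j k (swapq i j x))"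
  by (auto simp: swapq_def fun_eq_iff)

lemma merge_swap: "i \<in> S \<Longrightarrow> j \<in> S \<Longrightarrow> merge S (swapq i j x) z = swapq i j (merge S x z)"
  by (auto simp: swapq_def merge_def fun_eq_iff)

lemma bij_merge:
  assumes "S \<subseteq> V"
  shows "bij_betw (\<lambda>(x,z). merge S x z) (configs S \<times> configs (V - S)) (configs V)"
proof (rule bij_betw_imageI)
  show "inj_on (\<lambda>(x,z). merge S x z) (configs S \<times> configs (V - S))"
  proof (rule inj_onI, clarify)
    fix x z x' z'
    assume "x \<in> configs S" "z \<in> configs (V-S)" "x' \<in> configs S" "z' \<in> configs (V-S)"
      and e: "merge S x z = merge S x' z'"
      and hx: "x \<in> configs S" "z \<in> configs (V-S)" "x' \<in> configs S" "z' \<in> configs (V-S)"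
    have "x i = x' i \<and> z i = z' i" for i
    proof (cases "i \<in> S")
      case True
      then show ?thesis using hx fun_cong[OF e, of i] by (simp add: merge_def configs_def)
    next
      case False
      then show ?thesis using hx fun_cong[OF e, of i] by (simp add: merge_def configs_def)
    qed
    then show "x = x' \<and> z = z'" by auto
  qed
  show "(\<lambda>(x,z). merge S x z) ` (configs S \<times> configs (V - S)) = configs V"
  proof
    show "(\<lambda>(x,z). merge S x z) ` (configs S \<times> configs (V - S)) \<subseteq> configs V"
      using assms by (auto simp: configs_def merge_def)
  next
    show "configs V \<subseteq> (\<lambda>(x,z). merge S x z) ` (configs S \<times> configs (V - S))"
    proof
      fix w assume w: "w \<in> configs V"
      have "w = merge S (\<lambda>i. i \<in> S \<and> w i) (\<lambda>i. i \<notin> S \<and> w i)"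
        by (auto simp: merge_def fun_eq_iff)
      moreover have "(\<lambda>i. i \<in> S \<and> w i) \<in> configs S" "(\<lambda>i. i \<notin> S \<and> w i) \<in> configs (V - S)"
        using w by (auto simp: configs_def)
      ultimately show "w \<in> (\<lambda>(x,z). merge S x z) ` (configs S \<times> configs (V - S))" by force
    qed
  qed
qed

lemma sum_merge:
  assumes "S \<subseteq> V" "finite V"
  shows "(\<Sum>w\<in>configs V. f w) = (\<Sum>x\<in>configs S. \<Sum>z\<in>configs (V-S). f (merge S x z))"
proof -
  have fS: "finite (configs S)" "finite (configs (V-S))"
    using assms finite_configs finite_subset by auto
  have "(\<Sum>x\<in>configs S. \<Sum>z\<in>configs (V-S). f (merge S x z))
      = (\<Sum>p\<in>configs S \<times> configs (V-S). f ((\<lambda>(x,z). merge S x z) p))"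
    by (subst sum.cartesian_product) (simp add: case_prod_beta)
  also have "\<dots> = (\<Sum>w\<in>configs V. f w)"
    by (rule sum.reindex_bij_betw[OF bij_merge[OF assms(1)]])
  finally show ?thesis by simp
qed

lemma sesq_expand:
  assumes "finite (configs S)"
  shows "inner_S S (\<lambda>y. u y + t * w y) (apply_op S A (\<lambda>y. u y + t * w y)) =
    inner_S S u (apply_op S A u) + cnj t * inner_S S w (apply_op S A u)
    + t * inner_S S u (apply_op S A w) + cnj t * t * inner_S S w (apply_op S A w)"
proof -
  have ap: "apply_op S A (\<lambda>y. u y + t * w y) = (\<lambda>x. apply_op S A u x + t * apply_op S A w x)"
    by (simp add: apply_op_def fun_eq_iff algebra_simps sum.distrib sum_distrib_left)
  show ?thesis unfolding ap
    by (simp add: inner_S_def algebra_simps sum.distrib sum_distrib_left)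
qed

lemma swap_bij: "i \<in> V \<Longrightarrow> j \<in> V \<Longrightarrow> bij_betw (swapq i j) (configs V) (configs V)"
  by (rule bij_betw_byWitness[of _ "swapq i j"]) (auto intro: swap_configs)

lemma apply_delta: "finite (configs S) \<Longrightarrow> y' \<in> configs S \<Longrightarrow>
   apply_op S A (\<lambda>y. if y = y' then 1 else 0) z = A z y'"
proof -
  assume f: "finite (configs S)" and y: "y' \<in> configs S"
  have "(\<Sum>y\<in>configs S. A z y * (if y = y' then 1 else 0)) = (\<Sum>y\<in>configs S. if y = y' then A z y else 0)"
    by (rule sum.cong) auto
  then show ?thesis using f y by (simp add: apply_op_def)
qed

lemma edge_inv:
  assumes st: "is_state {1..n} \<rho>" and SV: "S \<subseteq> {1..n}"
    and sym: "symmetric_state S (partial_trace n S \<rho>)" and ij: "i \<in> S" "j \<in> S"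
    and w: "w \<in> configs {1..n}" and x: "x \<in> configs {1..n}"
  shows "\<rho> (swapq i j w) x = \<rho> w x"
proof -
  define V :: "nat set" where "V = {1..n}"
  define C where "C = configs V"
  define \<sigma> where "\<sigma> = swapq i j"
  define P where "P = partial_trace n S \<rho>"
  have finV: "finite V" unfolding V_def by simp
  have finC: "finite C" unfolding C_def using finV finite_configs by blast
  have finS: "finite (configs S)" using finV SV finite_configs finite_subset unfolding V_def by blast
  have ijV: "i \<in> V" "j \<in> V" using ij SV unfolding V_def by auto
  have sC: "\<And>w. w \<in> C \<Longrightarrow> \<sigma> w \<in> C" unfolding C_def \<sigma>_def using ijV swap_configs by blast
  have bij: "bij_betw \<sigma> C C" unfolding C_def \<sigma>_def using swap_bij ijV by blast
  have reidx: "\<And>g. (\<Sum>w\<in>C. g (\<sigma> w)) = (\<Sum>w\<in>C. g w)"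
    using sum.reindex_bij_betw[OF bij] by blast
  have hS: "P (\<sigma> x') x' = P x' x'" if x': "x' \<in> configs S" for x'
  proof -
    let ?e = "\<lambda>y. if y = x' then 1 else 0 :: complex"
    have "apply_op S P ?e \<in> sym_subspace S"
      using sym unfolding symmetric_state_def op_range_def P_def by blast
    then have "apply_op S P ?e (\<sigma> x') = apply_op S P ?e x'"
      using ij x' unfolding sym_subspace_def \<sigma>_def by blast
    then show ?thesis using apply_delta[OF finS x'] by simp
  qed
  have tr: "(\<Sum>w\<in>C. \<rho> (\<sigma> w) w) = (\<Sum>w\<in>C. \<rho> w w)"
  proof -
    have "(\<Sum>w\<in>C. \<rho> (\<sigma> w) w) = (\<Sum>x'\<in>configs S. \<Sum>z\<in>configs (V-S). \<rho> (\<sigma> (merge S x' z)) (merge S x' z))"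
      unfolding C_def using sum_merge[OF SV[folded V_def] finV] by blast
    also have "\<dots> = (\<Sum>x'\<in>configs S. P (\<sigma> x') x')"
      unfolding P_def partial_trace_def \<sigma>_def V_def using merge_swap[OF ij] by simp
    also have "\<dots> = (\<Sum>x'\<in>configs S. P x' x')" using hS by simp
    also have "\<dots> = (\<Sum>x'\<in>configs S. \<Sum>z\<in>configs (V-S). \<rho> (merge S x' z) (merge S x' z))"
      unfolding P_def partial_trace_def V_def by simp
    also have "\<dots> = (\<Sum>w\<in>C. \<rho> w w)"
      unfolding C_def by (rule sum_merge[OF SV[folded V_def] finV, of "\<lambda>w. \<rho> w w", symmetric])
    finally show ?thesis .
  qed
  define u where "u w = (\<lambda>y. (if y = w then 1 else 0) - (if y = \<sigma> w then 1 else 0 :: complex))" for w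
  have ap_u: "apply_op V \<rho> (u w) = (\<lambda>x. \<rho> x w - \<rho> x (\<sigma> w))" if "w \<in> C" for w
  proof -
    have "apply_op V \<rho> (u w) x = \<rho> x w - \<rho> x (\<sigma> w)" for x
    proof -
      have eq: "(\<lambda>y. \<rho> x y * u w y) = (\<lambda>y. (if y = w then \<rho> x y else 0) - (if y = \<sigma> w then \<rho> x y else 0))"
        by (auto simp: u_def fun_eq_iff)
      show ?thesis unfolding apply_op_def eq using that sC finC
        by (simp add: sum_subtractf C_def)
    qed
    then show ?thesis by auto
  qed
  have q_u: "inner_S V (u w) (apply_op V \<rho> (u w)) = \<rho> w w - \<rho> w (\<sigma> w) - \<rho> (\<sigma> w) w + \<rho> (\<sigma> w) (\<sigma> w)"
    if "w \<in> C" for w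
  proof -
    have eq: "(\<lambda>y. cnj (u w y) * (\<rho> y w - \<rho> y (\<sigma> w))) =
      (\<lambda>y. (if y = w then \<rho> y w - \<rho> y (\<sigma> w) else 0) - (if y = \<sigma> w then \<rho> y w - \<rho> y (\<sigma> w) else 0))"
      by (auto simp: u_def fun_eq_iff)
    show ?thesis unfolding inner_S_def ap_u[OF that] eq using that sC finC
      by (simp add: sum_subtractf C_def)
  qed
  have sumq: "(\<Sum>w\<in>C. inner_S V (u w) (apply_op V \<rho> (u w))) = 0"
  proof -
    have "(\<Sum>w\<in>C. inner_S V (u w) (apply_op V \<rho> (u w))) =
      (\<Sum>w\<in>C. \<rho> w w) - (\<Sum>w\<in>C. \<rho> w (\<sigma> w)) - (\<Sum>w\<in>C. \<rho> (\<sigma> w) w) + (\<Sum>w\<in>C. \<rho> (\<sigma> w) (\<sigma> w))"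
      using q_u by (simp add: sum_subtractf sum.distrib)
    also have "(\<Sum>w\<in>C. \<rho> w (\<sigma> w)) = (\<Sum>w\<in>C. \<rho> (\<sigma> w) w)"
      using reidx[of "\<lambda>w. \<rho> w (\<sigma> w)"] unfolding \<sigma>_def by simp
    also have "(\<Sum>w\<in>C. \<rho> (\<sigma> w) (\<sigma> w)) = (\<Sum>w\<in>C. \<rho> w w)"
      using reidx[of "\<lambda>w. \<rho> w w"] by simp
    finally show ?thesis using tr by simp
  qed
  have pos: "\<And>v. Im (inner_S V v (apply_op V \<rho> v)) = 0 \<and> Re (inner_S V v (apply_op V \<rho> v)) \<ge> 0"
    using st unfolding is_state_def V_def by blast
  have q0: "inner_S V (u w) (apply_op V \<rho> (u w)) = 0" if "w \<in> C" for w
  proof -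
    have "(\<Sum>w\<in>C. Re (inner_S V (u w) (apply_op V \<rho> (u w)))) = 0"
      using sumq by (metis Re_sum zero_complex.sel(1))
    then have "Re (inner_S V (u w) (apply_op V \<rho> (u w))) = 0"
      using sum_nonneg_eq_0_iff[OF finC, of "\<lambda>w. Re (inner_S V (u w) (apply_op V \<rho> (u w)))"] pos that by simp
    then show ?thesis using pos[of "u w"] by (simp add: complex_eq_iff)
  qed
  have wC: "w \<in> C" and xC: "x \<in> C" using w x unfolding C_def V_def by auto
  let ?e = "\<lambda>y. if y = x then 1 else 0 :: complex"
  have "\<And>t. Im (cnj t * inner_S V ?e (apply_op V \<rho> (u w)) + t * inner_S V (u w) (apply_op V \<rho> ?e)
        + cnj t * t * inner_S V ?e (apply_op V \<rho> ?e)) = 0 \<and>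
      Re (cnj t * inner_S V ?e (apply_op V \<rho> (u w)) + t * inner_S V (u w) (apply_op V \<rho> ?e)
        + cnj t * t * inner_S V ?e (apply_op V \<rho> ?e)) \<ge> 0"
    using pos[of "\<lambda>y. u w y + _ * ?e y"] sesq_expand[OF finC[unfolded C_def], of "u w" _ ?e \<rho>] q0[OF wC]
    by (simp only: add_0)
  then have b0: "inner_S V (u w) (apply_op V \<rho> ?e) = 0" using sesq_zero by blast
  have ape: "apply_op V \<rho> ?e = (\<lambda>y. \<rho> y x)"
    using apply_delta[OF finC[unfolded C_def] xC[unfolded C_def]] by auto
  have eq: "(\<lambda>y. cnj (u w y) * \<rho> y x) = (\<lambda>y. (if y = w then \<rho> y x else 0) - (if y = \<sigma> w then \<rho> y x else 0))"
    by (auto simp: u_def fun_eq_iff)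
  have "inner_S V (u w) (apply_op V \<rho> ?e) = \<rho> w x - \<rho> (\<sigma> w) x"
    unfolding ape inner_S_def eq using wC sC finC by (simp add: sum_subtractf C_def)
  then show ?thesis using b0 unfolding \<sigma>_def by simp
qed

lemma inv_trans:
  assumes "\<forall>x\<in>configs V. \<psi> (swapq a b x) = \<psi> x" "\<forall>x\<in>configs V. \<psi> (swapq b c x) = \<psi> x"
    and "a \<in> V" "b \<in> V" "c \<in> V"
  shows "\<forall>x\<in>configs V. \<psi> (swapq a c x) = \<psi> x"
proof
  fix x assume x: "x \<in> configs V"
  show "\<psi> (swapq a c x) = \<psi> x"
  proof (cases "a = c")
    case True then show ?thesis by simp
  next
    case ac: False
    show ?thesis
    proof (cases "b = a")
      case True then show ?thesis using assms(2) x by simp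
    next
      case ba: False
      show ?thesis
      proof (cases "b = c")
        case True then show ?thesis using assms(1) x by simp
      next
        case False
        have x1: "swapq a b x \<in> configs V" using x assms swap_configs by blast
        have x2: "swapq b c (swapq a b x) \<in> configs V" using x1 assms swap_configs by blast
        have "\<psi> (swapq a c x) = \<psi> (swapq a b (swapq b c (swapq a b x)))"
          using swap_trans[OF ba False ac] by simp
        also have "\<dots> = \<psi> x" using assms(1,2) x x1 x2 by simp
        finally show ?thesis .
      qed
    qed
  qed
qed

theorem mainTheorem12:
  fixes n :: nat and \<rho> :: qop and \<S> :: "nat set set"
  assumes "is_state {1..n} \<rho>"
    and "\<forall>S\<in>\<S>. S \<subseteq> {1..n}"
    and "hypergraph_connected {1..n} \<S>"
    and "\<forall>S\<in>\<S>. symmetric_state S (partial_trace n S \<rho>)"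
  shows "symmetric_state {1..n} \<rho>"
  unfolding symmetric_state_def
proof (intro conjI subsetI)
  show "is_state {1..n} \<rho>" by fact
  fix \<psi> assume "\<psi> \<in> op_range {1..n} \<rho>"
  then obtain v where \<psi>: "\<psi> = apply_op {1..n} \<rho> v" unfolding op_range_def by blast
  define inv where "inv a b \<longleftrightarrow> (\<forall>x\<in>configs {1..n}. \<psi> (swapq a b x) = \<psi> x)" for a b
  have edge: "inv a b" if "S \<in> \<S>" "a \<in> S" "b \<in> S" for S a b
    unfolding inv_def
  proof
    fix x assume x: "x \<in> configs {1..n}"
    have "\<rho> (swapq a b x) y = \<rho> x y" if "y \<in> configs {1..n}" for y
    proof -
      have "S \<subseteq> {1..n}" using assms(2) \<open>S \<in> \<S>\<close> by simp
      moreover have "symmetric_state S (partial_trace n S \<rho>)" using assms(4) \<open>S \<in> \<S>\<close> by simp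
      ultimately show ?thesis using edge_inv[OF assms(1) _ _ \<open>a \<in> S\<close> \<open>b \<in> S\<close> x that] by simp
    qed
    then show "\<psi> (swapq a b x) = \<psi> x" unfolding \<psi> apply_op_def by simp
  qed
  have tr: "inv a c" if "inv a b" "inv b c" "a \<in> {1..n}" "b \<in> {1..n}" "c \<in> {1..n}" for a b c
    using inv_trans[of "{1..n}" \<psi> a b c] that unfolding inv_def by simp
  have sy: "inv a b \<Longrightarrow> inv b a" for a b unfolding inv_def by (simp add: swap_comm)
  have all: "inv i j" if "i \<in> {1..n}" "j \<in> {1..n}" for i j
  proof -
    define X where "X = {k\<in>{1..n}. inv 1 k}"
    define Y where "Y = {1..n} - X"
    have one: "1 \<in> {1..n}" using that by auto
    have "1 \<in> X" unfolding X_def inv_def using one by simp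
    have "Y = {}"
    proof (rule ccontr)
      assume "Y \<noteq> {}"
      moreover have "X \<noteq> {}" using \<open>1 \<in> X\<close> by blast
      moreover have "X \<union> Y = {1..n}" "X \<inter> Y = {}" unfolding X_def Y_def by auto
      ultimately obtain S where S: "S \<in> \<S>" "S \<inter> X \<noteq> {}" "S \<inter> Y \<noteq> {}"
        using assms(3)[unfolded hypergraph_connected_def, rule_format, of X Y] by blast
      then obtain a b where ab: "a \<in> S" "a \<in> X" "b \<in> S" "b \<in> Y" by blast
      have "b \<in> {1..n}" using ab Y_def by auto
      have "inv 1 b" using tr[OF _ edge[OF S(1) ab(1) ab(3)] one] ab \<open>b \<in> {1..n}\<close>
        unfolding X_def by blast
      then show False using ab \<open>b \<in> {1..n}\<close> unfolding Y_def X_def by blast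
    qed
    then have "inv 1 i" "inv 1 j" using that unfolding X_def Y_def by auto
    then show ?thesis using tr[OF sy _ that(1) one that(2)] by blast
  qed
  show "\<psi> \<in> sym_subspace {1..n}"
    unfolding sym_subspace_def using all unfolding inv_def by blast
qed

end
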